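(* Let $\langle A,C,d,O,v,(\prec_a)_{a\in A}\rangle$ be an infinite sequential game with $C$ finite, let $a\in A$, and assume: (1) $\prec_a$ is a strict weak order; (2) for every play $p\in C^\omega$, every increasing $\varphi:\mathbb{N}\to\mathbb{N}$ and every sequence $(s_n)_{n\in\mathbb{N}}$ of strategies of player $a$, if $g_a(p_{<\varphi(n+1)},s_{n+1})\subsetneq g_a(p_{<\varphi(n)},s_n)$ for all $n\in\mathbb{N}$, then $v(p)\in\bigcap_{n\in\mathbb{N}}g_a(p_{<\varphi(n)},s_n)$. Then for every $\gamma\in C^*$ there exists a strategy $s$ of player $a$ such that $g_a(\gamma,s)=G_a(\gamma)$.
   Context: An infinite sequential game $\langle A,C,d,O,v,(\prec_a)_{a\in A}\rangle$ consists of a non-empty set of agents $A$, a non-empty set of choices $C$, $d:C^*\to A$ (the agent choosing after each finite history), a non-empty set of outcomes $O$, $v:C^\omega\to O$, and binary relations $\prec_a$ on $O$ (preferences). A strategy of $a$ is a function $s:d^{-1}(\{a\})\to C$. For a partial function $t:\subseteq C^*\to C$, let $P(t)$ be the set of plays $p(\sigma)$ (where $p_n=\sigma(p_{<n})$) over all total $\sigma:C^*\to C$ extending $t$. For $\gamma\in C^*$ and a strategy $s$ of $a$, let $s|_{\gamma}$ be the restriction of $s$ to histories in $d^{-1}(\{a\})$ extending $\gamma$, and define the guarantee $g_a(\gamma,s):=\{o\in O\mid\exists p\in P(s|_\gamma)\cap\gamma C^\omega,\ \neg(o\prec_a v(p))\}$ and the best guarantee $G_a(\gamma):=\bigcap_s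 g_a(\gamma,s)$ (intersection over all strategies $s$ of $a$). $p_{<n}$ denotes the length-$n$ prefix of $p$. A strict weak order is an irreflexive, transitive relation $\prec$ such that $\neg(x\prec y)\wedge\neg(y\prec z)$ implies $\neg(x\prec z)$. *)

theory Defs
  imports Main "HOL-Library.Sublist"
begin

text \<open>Choices are the elements of type 'c, agents of type 'a, outcomes of type 'o.\<close>

definition strict_weak_order :: "('o \<Rightarrow> 'o \<Rightarrow> bool) \<Rightarrow> bool" where
  "strict_weak_order r \<longleftrightarrow> (\<forall>x. \<not> r x x) \<and> (\<forall>x y z. r x y \<and> r y z \<longrightarrow> r x z)
     \<and> (\<forall>x y z. \<not> r x y \<and> \<not> r y z \<longrightarrow> \<not> r x z)"

definition pref :: "(nat \<Rightarrow> 'c) \<Rightarrow> nat \<Rightarrow> 'c list" where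
  "pref p n = map p [0..<n]"

definition is_strategy :: "('c list \<Rightarrow> 'a) \<Rightarrow> 'a \<Rightarrow> ('c list \<rightharpoonup> 'c) \<Rightarrow> bool" where
  "is_strategy d a s \<longleftrightarrow> dom s = {h. d h = a}"

text \<open>P(t): plays induced by total extensions of the partial function t\<close>
definition plays :: "('c list \<rightharpoonup> 'c) \<Rightarrow> (nat \<Rightarrow> 'c) set" where
  "plays t = {p. \<exists>\<sigma>::'c list \<Rightarrow> 'c. (\<forall>h \<in> dom t. t h = Some (\<sigma> h)) \<and>
                   (\<forall>n. p n = \<sigma> (pref p n))}"

definition restr :: "('c list \<rightharpoonup> 'c) \<Rightarrow> 'c list \<Rightarrow> ('c list \<rightharpoonup> 'c)" where
  "restr s \<gamma> = (\<lambda>h. if prefix \<gamma> h then s h else None)"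

definition guarantee :: "((nat \<Rightarrow> 'c) \<Rightarrow> 'o) \<Rightarrow> ('a \<Rightarrow> 'o \<Rightarrow> 'o \<Rightarrow> bool) \<Rightarrow> 'a
    \<Rightarrow> 'c list \<Rightarrow> ('c list \<rightharpoonup> 'c) \<Rightarrow> 'o set" where
  "guarantee v prec a \<gamma> s =
     {x. \<exists>p \<in> plays (restr s \<gamma>). pref p (length \<gamma>) = \<gamma> \<and> \<not> prec a x (v p)}"

definition best_guarantee :: "('c list \<Rightarrow> 'a) \<Rightarrow> ((nat \<Rightarrow> 'c) \<Rightarrow> 'o) \<Rightarrow> ('a \<Rightarrow> 'o \<Rightarrow> 'o \<Rightarrow> bool)
    \<Rightarrow> 'a \<Rightarrow> 'c list \<Rightarrow> 'o set" where
  "best_guarantee d v prec a \<gamma> = (\<Inter>s \<in> {s. is_strategy d a s}. guarantee v prec a \<gamma> s)"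

end

theory Submission
  imports Defs
begin

lemma pref_length[simp]: "length (pref p n) = n" by (simp add: pref_def)
lemma pref_Suc: "pref p (Suc n) = pref p n @ [p n]" by (simp add: pref_def)
lemma take_pref: "m \<le> n \<Longrightarrow> take m (pref p n) = pref p m"
  by (simp add: pref_def take_map min_def)
lemma prefix_pref: "pref p (length h) = h \<Longrightarrow> length h \<le> n \<Longrightarrow> prefix h (pref p n)"
  by (metis take_is_prefix take_pref)
lemma prefix_pref2: "prefix h (pref p n) \<Longrightarrow> pref p (length h) = h \<and> length h \<le> n"
  by (metis prefix_def prefix_length_le pref_length take_pref append_take_drop_id
        append_eq_append_conv)

lemma plays_char: "p \<in> plays t \<longleftrightarrow> (\<forall>n. pref p n \<in> dom t \<longrightarrow> t (pref p n) = Some (p n))"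
proof
  assume "p \<in> plays t"
  then obtain \<sigma> where "\<forall>h\<in>dom t. t h = Some (\<sigma> h)" "\<forall>n. p n = \<sigma> (pref p n)"
    by (auto simp: plays_def)
  thus "\<forall>n. pref p n \<in> dom t \<longrightarrow> t (pref p n) = Some (p n)" by auto
next
  assume R: "\<forall>n. pref p n \<in> dom t \<longrightarrow> t (pref p n) = Some (p n)"
  define \<sigma> where "\<sigma> h = (case t h of Some c \<Rightarrow> c | None \<Rightarrow> p (length h))" for h
  have "\<forall>h\<in>dom t. t h = Some (\<sigma> h)" by (auto simp: \<sigma>_def)
  moreover have "\<forall>n. p n = \<sigma> (pref p n)" using R by (auto simp: \<sigma>_def split: option.split)
  ultimately show "p \<in> plays t" unfolding plays_def by blast
qed

lemma guar_char: "x \<in> guarantee v prec a h s \<longleftrightarrow> (\<exists>p. pref p (length h) = h \<and>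
   (\<forall>n\<ge>length h. pref p n \<in> dom s \<longrightarrow> s (pref p n) = Some (p n)) \<and> \<not> prec a x (v p))"
proof -
  have "p \<in> plays (restr s h) \<longleftrightarrow> (\<forall>n\<ge>length h. pref p n \<in> dom s \<longrightarrow> s (pref p n) = Some (p n))"
    if "pref p (length h) = h" for p
  proof -
    have "prefix h (pref p n) \<longleftrightarrow> length h \<le> n" for n
      using that prefix_pref[OF that] prefix_pref2 by blast
    then show ?thesis unfolding plays_char restr_def dom_def by auto
  qed
  thus ?thesis unfolding guarantee_def by blast
qed

definition upset :: "('o \<Rightarrow> 'o \<Rightarrow> bool) \<Rightarrow> 'o set \<Rightarrow> bool" where
  "upset r U \<longleftrightarrow> (\<forall>x y. x \<in> U \<longrightarrow> \<not> r y x \<longrightarrow> y \<in> U)"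

lemma upset_g: "strict_weak_order (prec a) \<Longrightarrow> upset (prec a) (guarantee v prec a h s)"
  unfolding upset_def guarantee_def strict_weak_order_def
proof (intro allI impI)
  fix x y assume s: "(\<forall>x. \<not> prec a x x) \<and> (\<forall>x y z. prec a x y \<and> prec a y z \<longrightarrow> prec a x z) \<and>
     (\<forall>x y z. \<not> prec a x y \<and> \<not> prec a y z \<longrightarrow> \<not> prec a x z)"
    and "x \<in> {x. \<exists>p\<in>plays (restr s h). pref p (length h) = h \<and> \<not> prec a x (v p)}"
    and n: "\<not> prec a y x"
  then obtain p where "p\<in>plays (restr s h)" "pref p (length h) = h" "\<not> prec a x (v p)" by blast
  moreover have "\<not> prec a y (v p)" using s n \<open>\<not> prec a x (v p)\<close> by blast
  ultimately show "y \<in> {x. \<exists>p\<in>plays (restr s h). pref p (length h) = h \<and> \<not> prec a x (v p)}" by blast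
qed

lemma upset_G: "strict_weak_order (prec a) \<Longrightarrow> upset (prec a) (best_guarantee d v prec a h)"
  unfolding upset_def
proof (intro allI impI)
  fix x y assume s: "strict_weak_order (prec a)" and x: "x \<in> best_guarantee d v prec a h" and n: "\<not> prec a y x"
  have "y \<in> guarantee v prec a h t" if "is_strategy d a t" for t
  proof -
    have "x \<in> guarantee v prec a h t" using x that by (auto simp: best_guarantee_def)
    then show ?thesis using upset_g[where prec=prec and a=a and v=v and h=h and s=t, OF s] n unfolding upset_def by blast
  qed
  then show "y \<in> best_guarantee d v prec a h" by (auto simp: best_guarantee_def)
qed

lemma upset_chain: assumes s: "strict_weak_order r" and u: "upset r U" and w: "upset r V"
  shows "U \<subseteq> V \<or> V \<subseteq> U"
proof (rule ccontr)
  assume "\<not> (U \<subseteq> V \<or> V \<subseteq> U)"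
  then obtain x y where xy: "x \<in> U" "x \<notin> V" "y \<in> V" "y \<notin> U" by blast
  show False
  proof (cases "r y x")
    case True
    then have "\<not> r x y" using s unfolding strict_weak_order_def by blast
    then show False using w xy unfolding upset_def by blast
  next
    case False
    then show False using u xy unfolding upset_def by blast
  qed
qed

lemma finite_chain_min: "finite F \<Longrightarrow> F \<noteq> {} \<Longrightarrow> \<forall>A\<in>F. \<forall>B\<in>F. A \<subseteq> B \<or> B \<subseteq> A
   \<Longrightarrow> \<exists>M\<in>F. \<forall>A\<in>F. M \<subseteq> A"
proof (induction F rule: finite_ne_induct)
  case (singleton x) then show ?case by auto
next
  case (insert x F)
  then obtain M where "M \<in> F" "\<forall>A\<in>F. M \<subseteq> A" by auto
  have "x \<subseteq> M \<or> M \<subseteq> x" using insert.prems \<open>M \<in> F\<close> by blast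
  then show ?case
  proof
    assume "x \<subseteq> M" then show ?thesis using \<open>\<forall>A\<in>F. M \<subseteq> A\<close> by blast
  next
    assume "M \<subseteq> x" then show ?thesis using \<open>\<forall>A\<in>F. M \<subseteq> A\<close> \<open>M \<in> F\<close> by blast
  qed
qed

lemma child_sub: "(h \<in> dom s \<Longrightarrow> s h = Some c) \<Longrightarrow>
   guarantee v prec a (h@[c]) s \<subseteq> guarantee v prec a h s"
proof
  fix x assume H: "h \<in> dom s \<Longrightarrow> s h = Some c" and "x \<in> guarantee v prec a (h@[c]) s"
  then obtain p where p1: "pref p (Suc (length h)) = h @ [c]"
    and p2: "\<forall>n\<ge>Suc (length h). pref p n \<in> dom s \<longrightarrow> s (pref p n) = Some (p n)"
    and p3: "\<not> prec a x (v p)" by (auto simp: guar_char)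
  have e: "pref p (length h) = h" "p (length h) = c" using p1 by (auto simp: pref_Suc)
  have "\<forall>n\<ge>length h. pref p n \<in> dom s \<longrightarrow> s (pref p n) = Some (p n)"
  proof (intro allI impI)
    fix n assume "length h \<le> n" "pref p n \<in> dom s"
    then show "s (pref p n) = Some (p n)"
      using p2 e H by (cases "n = length h") auto
  qed
  with e p3 show "x \<in> guarantee v prec a h s" by (auto simp: guar_char)
qed

lemma a_node_sub: "s h = Some c \<Longrightarrow> guarantee v prec a h s \<subseteq> guarantee v prec a (h@[c]) s"
proof
  fix x assume H: "s h = Some c" and "x \<in> guarantee v prec a h s"
  then obtain p where p1: "pref p (length h) = h"
    and p2: "\<forall>n\<ge>length h. pref p n \<in> dom s \<longrightarrow> s (pref p n) = Some (p n)"
    and p3: "\<not> prec a x (v p)" by (auto simp: guar_char)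
  have "p (length h) = c" using p2 p1 H by (metis domI le_refl option.inject)
  then have "pref p (length (h@[c])) = h@[c]" using p1 by (simp add: pref_Suc)
  with p2 p3 show "x \<in> guarantee v prec a (h@[c]) s" unfolding guar_char
    by (intro exI[of _ p]) auto
qed

lemma other_node: "d h \<noteq> a \<Longrightarrow> best_guarantee d v prec a (h@[c]) \<subseteq> best_guarantee d v prec a h"
proof -
  have "best_guarantee d v prec a (h@[c]) \<subseteq> guarantee v prec a h s" if "d h \<noteq> a" "is_strategy d a s" for s
  proof -
    have "h \<notin> dom s" using that by (auto simp: is_strategy_def)
    have "guarantee v prec a (h@[c]) s \<subseteq> guarantee v prec a h s" by (rule child_sub) (use \<open>h \<notin> dom s\<close> in blast)
    moreover have "best_guarantee d v prec a (h@[c]) \<subseteq> guarantee v prec a (h@[c]) s"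
      using that(2) by (auto simp: best_guarantee_def)
    ultimately show ?thesis by blast
  qed
  then show "d h \<noteq> a \<Longrightarrow> ?thesis" by (auto simp: best_guarantee_def)
qed

lemma a_node_choice:
  assumes finC: "finite (UNIV :: 'c set)" and swo: "strict_weak_order (prec a)" and dh: "d h = a"
  shows "\<exists>c. best_guarantee d v prec a (h@[c::'c]) \<subseteq> best_guarantee d v prec a h"
proof -
  let ?F = "(\<lambda>c. best_guarantee d v prec a (h@[c::'c])) ` UNIV"
  have "\<exists>M\<in>?F. \<forall>A\<in>?F. M \<subseteq> A"
  proof (rule finite_chain_min)
    show "finite ?F" using finC by simp
    show "?F \<noteq> {}" by simp
    show "\<forall>A\<in>?F. \<forall>B\<in>?F. A \<subseteq> B \<or> B \<subseteq> A"
      using upset_chain[OF swo upset_G[where d=d and v=v and prec=prec and a=a, OF swo] upset_G[where d=d and v=v and prec=prec and a=a, OF swo]] by blast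
  qed
  then obtain c0 where c0: "\<forall>c. best_guarantee d v prec a (h@[c0]) \<subseteq> best_guarantee d v prec a (h@[c])"
    by auto
  have "best_guarantee d v prec a (h@[c0]) \<subseteq> guarantee v prec a h s" if "is_strategy d a s" for s
  proof -
    from that dh obtain c where sc: "s h = Some c" by (auto simp: is_strategy_def)
    have "best_guarantee d v prec a (h@[c]) \<subseteq> guarantee v prec a (h@[c]) s"
      using that by (auto simp: best_guarantee_def)
    also have "\<dots> \<subseteq> guarantee v prec a h s" by (rule child_sub) (use sc in blast)
    finally show ?thesis using c0 by blast
  qed
  then show ?thesis by (auto simp: best_guarantee_def)
qed


theorem lemma20:
  fixes d :: "'c list \<Rightarrow> 'a" and v :: "(nat \<Rightarrow> 'c) \<Rightarrow> 'o"
    and prec :: "'a \<Rightarrow> 'o \<Rightarrow> 'o \<Rightarrow> bool" and a :: 'a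
  assumes finC: "finite (UNIV :: 'c set)"
    and swo: "strict_weak_order (prec a)"
    and hyp: "\<And>(p :: nat \<Rightarrow> 'c) (\<phi> :: nat \<Rightarrow> nat) ss.
      strict_mono \<phi> \<Longrightarrow> (\<forall>n. is_strategy d a (ss n)) \<Longrightarrow>
      (\<forall>n. guarantee v prec a (pref p (\<phi> (Suc n))) (ss (Suc n))
             \<subset> guarantee v prec a (pref p (\<phi> n)) (ss n)) \<Longrightarrow>
      v p \<in> (\<Inter>n. guarantee v prec a (pref p (\<phi> n)) (ss n))"
  shows "\<forall>\<gamma> :: 'c list. \<exists>s. is_strategy d a s \<and>
           guarantee v prec a \<gamma> s = best_guarantee d v prec a \<gamma>"
proof
  fix \<gamma> :: "'c list"
  define g where "g = guarantee v prec a"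
  define G where "G = best_guarantee d v prec a"
  define att where "att h \<longleftrightarrow> (\<exists>s. is_strategy d a s \<and> g h s = G h)" for h
  define W where "W h = (SOME s. is_strategy d a s \<and> g h s = G h)" for h
  define ch where "ch h = (SOME c. G (h@[c]) \<subseteq> G h)" for h
  define Q where "Q h n \<longleftrightarrow> length \<gamma> \<le> n \<and> n \<le> length h \<and> att (take n h)" for h n
  define st where "st h = (if d h \<noteq> a then None else if prefix \<gamma> h \<and> (\<exists>n. Q h n)
      then W (take (LEAST n. Q h n) h) h else Some (ch h))" for h
  have W: "is_strategy d a (W h) \<and> g h (W h) = G h" if "att h" for h
    using that unfolding att_def W_def by (rule someI_ex)
  have ch: "G (h@[ch h]) \<subseteq> G h" if "d h = a" for h
    unfolding ch_def G_def by (rule someI_ex, rule a_node_choice[where prec=prec and a=a and v=v and d=d, OF finC swo that])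
  have Gsub: "G h \<subseteq> g h s" if "is_strategy d a s" for h s
    using that unfolding G_def g_def best_guarantee_def by blast
  have strat: "is_strategy d a st"
  proof -
    have "st h \<noteq> None" if "d h = a" for h
    proof (cases "prefix \<gamma> h \<and> (\<exists>n. Q h n)")
      case True
      then have "att (take (LEAST n. Q h n) h)" using LeastI_ex[of "Q h"] unfolding Q_def by blast
      then have "is_strategy d a (W (take (LEAST n. Q h n) h))" using W by blast
      then show ?thesis using that True unfolding st_def is_strategy_def by auto
    qed (use that in \<open>auto simp: st_def\<close>)
    then show ?thesis unfolding is_strategy_def st_def by (auto split: if_splits)
  qed
  have main: "v p \<in> G \<gamma>" if p1: "pref p (length \<gamma>) = \<gamma>"
    and p2: "\<forall>n\<ge>length \<gamma>. pref p n \<in> dom st \<longrightarrow> st (pref p n) = Some (p n)" for p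
  proof -
    have Qeq: "Q (pref p m) n \<longleftrightarrow> length \<gamma> \<le> n \<and> n \<le> m \<and> att (pref p n)" for m n
      unfolding Q_def by (auto simp: take_pref)
    have hpre: "prefix \<gamma> (pref p m)" if "length \<gamma> \<le> m" for m
      using prefix_pref[OF p1 that] .
    have cons: "st (pref p m) = Some (p m)" if "length \<gamma> \<le> m" "d (pref p m) = a" for m
      using p2 strat that unfolding is_strategy_def by auto
    have mono: "G (pref p (Suc m)) \<subseteq> G (pref p m)"
      if m: "length \<gamma> \<le> m" and na: "\<forall>n. length \<gamma> \<le> n \<and> n \<le> m \<longrightarrow> \<not> att (pref p n)" for m
    proof (cases "d (pref p m) = a")
      case True
      have "\<not> (\<exists>n. Q (pref p m) n)" using na Qeq by blast
      then have "st (pref p m) = Some (ch (pref p m))" using True unfolding st_def by auto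
      then have "p m = ch (pref p m)" using cons[OF m True] by simp
      then show ?thesis using ch[OF True] by (simp add: pref_Suc)
    next
      case False
      then show ?thesis unfolding G_def pref_Suc by (rule other_node)
    qed
    have desc: "G (pref p N) \<subseteq> G \<gamma>"
      if "length \<gamma> \<le> N" "\<forall>n. length \<gamma> \<le> n \<and> n < N \<longrightarrow> \<not> att (pref p n)" for N
      using that
    proof (induction N rule: dec_induct)
      case base then show ?case using p1 by simp
    next
      case (step N)
      have "G (pref p (Suc N)) \<subseteq> G (pref p N)"
        using mono[OF step.hyps(1)] step.prems by auto
      then show ?case using step.IH step.prems by auto
    qed
    show ?thesis
    proof (cases "\<exists>n. length \<gamma> \<le> n \<and> att (pref p n)")
      case True
      define n0 where "n0 = (LEAST n. length \<gamma> \<le> n \<and> att (pref p n))"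
      have n0: "length \<gamma> \<le> n0" "att (pref p n0)" using LeastI_ex[OF True] unfolding n0_def by auto
      have n0min: "\<not> att (pref p n)" if "length \<gamma> \<le> n" "n < n0" for n
        using not_less_Least[of n "\<lambda>n. length \<gamma> \<le> n \<and> att (pref p n)"] that unfolding n0_def by blast
      have Wn: "is_strategy d a (W (pref p n0))" "g (pref p n0) (W (pref p n0)) = G (pref p n0)"
        using W[OF n0(2)] by auto
      have follow: "W (pref p n0) (pref p m) = Some (p m)" if "n0 \<le> m" "pref p m \<in> dom (W (pref p n0))" for m
      proof -
        have da: "d (pref p m) = a" using that(2) Wn(1) unfolding is_strategy_def by auto
        have "(LEAST n. Q (pref p m) n) = n0"
        proof (rule Least_equality)
          show "Q (pref p m) n0" using Qeq n0 that by auto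
          show "\<And>y. Q (pref p m) y \<Longrightarrow> n0 \<le> y" using Qeq n0min by (meson not_le)
        qed
        moreover have "\<exists>n. Q (pref p m) n" using Qeq n0 that by auto
        ultimately have "st (pref p m) = W (pref p n0) (pref p m)"
          using da hpre[of m] n0 that unfolding st_def by (auto simp: take_pref)
        then show ?thesis using cons[of m] da n0 that by auto
      qed
      have "v p \<in> g (pref p n0) (W (pref p n0))"
        unfolding g_def guar_char
      proof (intro exI[of _ p] conjI)
        show "pref p (length (pref p n0)) = pref p n0" by simp
        show "\<forall>n\<ge>length (pref p n0). pref p n \<in> dom (W (pref p n0)) \<longrightarrow> W (pref p n0) (pref p n) = Some (p n)"
          using follow by simp
        show "\<not> prec a (v p) (v p)" using swo unfolding strict_weak_order_def by blast
      qed
      then have "v p \<in> G (pref p n0)" using Wn by simp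
      then show ?thesis using desc[OF n0(1)] n0min by blast
    next
      case False
      have monoall: "G (pref p (Suc m)) \<subseteq> G (pref p m)" if "length \<gamma> \<le> m" for m
        using mono[OF that] False by blast
      show ?thesis
      proof (rule ccontr)
        assume nv: "v p \<notin> G \<gamma>"
        then obtain t where t: "is_strategy d a t" "v p \<notin> g \<gamma> t"
          unfolding G_def g_def best_guarantee_def by blast
        let ?h = "\<lambda>k. pref p (length \<gamma> + k)"
        have step: "\<exists>s. is_strategy d a s \<and> g (?h (Suc k)) s \<subset> g (?h k) u"
          if u: "is_strategy d a u" for k u
        proof -
          have "G (?h k) \<subseteq> g (?h k) u" using Gsub[OF u] .
          moreover have "G (?h k) \<noteq> g (?h k) u" using False[unfolded att_def] u le_add1[of "length \<gamma>" k] by metis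
          moreover have "G (?h (Suc k)) \<subseteq> G (?h k)" using monoall[of "length \<gamma> + k"] by simp
          ultimately obtain y where y: "y \<in> g (?h k) u" "y \<notin> G (?h (Suc k))" by blast
          then obtain s where s: "is_strategy d a s" "y \<notin> g (?h (Suc k)) s"
            unfolding G_def g_def best_guarantee_def by blast
          have "g (?h (Suc k)) s \<subseteq> g (?h k) u \<or> g (?h k) u \<subseteq> g (?h (Suc k)) s"
            unfolding g_def by (rule upset_chain[OF swo upset_g[where prec=prec and a=a and v=v, OF swo] upset_g[where prec=prec and a=a and v=v, OF swo]])
          then have "g (?h (Suc k)) s \<subset> g (?h k) u" using y s by blast
          then show ?thesis using s by blast
        qed
        define ss where "ss = rec_nat t (\<lambda>k u. SOME s. is_strategy d a s \<and> g (?h (Suc k)) s \<subset> g (?h k) u)"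
        have ss0: "ss 0 = t" unfolding ss_def by simp
        have ssS: "ss (Suc k) = (SOME s. is_strategy d a s \<and> g (?h (Suc k)) s \<subset> g (?h k) (ss k))" for k
          unfolding ss_def by simp
        have ssP: "is_strategy d a (ss k)" for k
        proof (induction k)
          case 0 then show ?case using t ss0 by simp
        next
          case (Suc k) then show ?case unfolding ssS using someI_ex[OF step[OF Suc]] by blast
        qed
        have ssD: "g (?h (Suc k)) (ss (Suc k)) \<subset> g (?h k) (ss k)" for k
          unfolding ssS using someI_ex[OF step[OF ssP[of k]]] by blast
        have "v p \<in> (\<Inter>n. guarantee v prec a (pref p ((\<lambda>k. length \<gamma> + k) n)) (ss n))"
        proof (rule hyp)
          show "strict_mono (\<lambda>k. length \<gamma> + k)" by (simp add: strict_mono_def)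
          show "\<forall>n. is_strategy d a (ss n)" using ssP by blast
          show "\<forall>n. guarantee v prec a (pref p (length \<gamma> + Suc n)) (ss (Suc n))
             \<subset> guarantee v prec a (pref p (length \<gamma> + n)) (ss n)"
            using ssD unfolding g_def by simp
        qed
        then have "v p \<in> g \<gamma> t" using p1 ss0 unfolding g_def by (metis INT_E UNIV_I add_0_right)
        then show False using t by blast
      qed
    qed
  qed
  have "g \<gamma> st = G \<gamma>"
  proof
    show "G \<gamma> \<subseteq> g \<gamma> st" using Gsub strat by blast
    show "g \<gamma> st \<subseteq> G \<gamma>"
    proof
      fix x assume "x \<in> g \<gamma> st"
      then obtain p where p1: "pref p (length \<gamma>) = \<gamma>"
        and p2: "\<forall>n\<ge>length \<gamma>. pref p n \<in> dom st \<longrightarrow> st (pref p n) = Some (p n)"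
        and p3: "\<not> prec a x (v p)" unfolding g_def guar_char by blast
      have "v p \<in> G \<gamma>" using main p1 p2 by blast
      then show "x \<in> G \<gamma>" using upset_G[where d=d and v=v and prec=prec and a=a and h=\<gamma>, OF swo] p3
        unfolding upset_def G_def by blast
    qed
  qed
  then show "\<exists>s. is_strategy d a s \<and> guarantee v prec a \<gamma> s = best_guarantee d v prec a \<gamma>"
    using strat unfolding g_def G_def by blast
qed

end
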